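(* Let $T\colon\mathbb{R}[x]\to\mathbb{R}[x]$ be the linear transformation determined by $T[x^n]=P_n^{Le}(x)$ for all $n\ge0$, and write $T=\sum_{n=0}^\infty\frac{Q_n^{Le}(x)}{n!}D^n$. Then for all $k\ge0$, $$Q^{Le}_{2k+1}(x)=0,\qquad Q^{Le}_{2k}(x)=\frac{(2k-1)!!}{(2k)!!}(x^2-1)^k.$$ Hence $T=\sum_{k=0}^\infty\frac{(2k-1)!!}{(2k)!!\,(2k)!}(x^2-1)^kD^{2k}$.
   Context: $P_n^{Le}(x)=\frac{1}{2^nn!}\frac{d^n}{dx^n}(x^2-1)^n$ is the $n$th Legendre polynomial; $D=d/dx$. Every linear operator $T\colon\mathbb{C}[x]\to\mathbb{C}[x]$ has a unique representation $T=\sum_{k=0}^\infty \frac{Q_k(x)}{k!}D^k$ with polynomials $Q_k(x)$. Double factorials use the conventions $(-1)!!=1$ and $0!!=1$. *)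

theory Defs
  imports "HOL-Computational_Algebra.Polynomial"
begin

text \<open>Double factorial with the conventions (-1)!! = 1 and 0!! = 1.
  Arguments are natural numbers; (2k-1)!! for k = 0 is written dfact (2*0-1) = dfact 0 = 1.\<close>
fun dfact :: "nat \<Rightarrow> nat" where
  "dfact 0 = 1"
| "dfact (Suc 0) = 1"
| "dfact (Suc (Suc n)) = Suc (Suc n) * dfact n"

definition legendreP :: "nat \<Rightarrow> real poly" where
  "legendreP n = smult (1 / (2 ^ n * fact n)) ((pderiv ^^ n) ([:-1, 0, 1:] ^ n))"

definition legendreT :: "real poly \<Rightarrow> real poly" where
  "legendreT p = (\<Sum>i\<le>degree p. smult (coeff p i) (legendreP i))"

text \<open>Q represents the operator S as sum_k Q_k/k! D^k (finite on each polynomial,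
  since D^k p = 0 for k > degree p).\<close>
definition represents :: "(nat \<Rightarrow> real poly) \<Rightarrow> (real poly \<Rightarrow> real poly) \<Rightarrow> bool" where
  "represents Q S \<longleftrightarrow>
     (\<forall>p. S p = (\<Sum>k\<le>degree p. smult (1 / fact k) (Q k * (pderiv ^^ k) p)))"

end

theory Submission
  imports Defs
begin

lemma pderiv_lin [simp]: "pderiv [:a, 1:] = (1 :: real poly)"
  by (simp add: pderiv_pCons)

lemma higher_pderiv_linpow:
  "(pderiv ^^ k) ([:a, 1:] ^ n :: real poly) =
     (if k \<le> n then smult (fact n / fact (n - k)) ([:a, 1:] ^ (n - k)) else 0)"
proof (induction k)
  case 0
  then show ?case by simp
next
  case (Suc k)
  show ?case
  proof (cases "Suc k \<le> n")
    case True
    then have eq: "n - k = Suc (n - Suc k)" by simp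
    have f: "fact (n - k) = real (n - k) * fact (n - Suc k)"
      by (simp add: eq)
    have nk: "real (n - k) \<noteq> 0" using True by simp
    have "(pderiv ^^ Suc k) ([:a, 1:] ^ n :: real poly) = pderiv ((pderiv ^^ k) ([:a, 1:] ^ n))" by simp
    also have "\<dots> = smult (fact n / fact (n - k)) (pderiv ([:a, 1:] ^ Suc (n - Suc k)))"
      using Suc True by (simp add: pderiv_smult eq)
    also have "\<dots> = smult (fact n / fact (n - k) * of_nat (n - k)) ([:a, 1:] ^ (n - Suc k))"
      unfolding pderiv_power_Suc by (simp add: eq)
    also have "fact n / fact (n - k) * of_nat (n - k) = (fact n / fact (n - Suc k) :: real)"
      using nk unfolding f by (simp add: field_simps)
    finally show ?thesis using True by simp
  next
    case False
    then show ?thesis using Suc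
      by (cases "k = n") (auto simp: pderiv_smult)
  qed
qed

lemma leibniz:
  "(pderiv ^^ n) (p * q :: real poly) =
     (\<Sum>k\<le>n. smult (of_nat (n choose k)) ((pderiv ^^ k) p * (pderiv ^^ (n - k)) q))"
proof (induction n)
  case 0
  then show ?case by simp
next
  case (Suc n)
  define D where "D = (\<lambda>k. (pderiv ^^ k) p)"
  define E where "E = (\<lambda>k. (pderiv ^^ k) q)"
  have pd_sum: "pderiv (sum f A) = (\<Sum>x\<in>A. pderiv (f x))" for f :: "nat \<Rightarrow> real poly" and A
    using higher_pderiv_sum[of 1 f A] by simp
  have "(pderiv ^^ Suc n) (p * q) = pderiv ((pderiv ^^ n) (p * q))" by simp
  also have "\<dots> = (\<Sum>k\<le>n. smult (of_nat (n choose k)) (D (Suc k) * E (n - k)))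
                 + (\<Sum>k\<le>n. smult (of_nat (n choose k)) (D k * E (Suc (n - k))))"
    unfolding Suc.IH pd_sum
    by (simp add: pderiv_smult pderiv_mult D_def E_def sum.distrib algebra_simps smult_add_right)
  also have "(\<Sum>k\<le>n. smult (of_nat (n choose k)) (D k * E (Suc (n - k))))
     = D 0 * E (Suc n) + (\<Sum>k\<le>n. smult (of_nat (n choose Suc k)) (D (Suc k) * E (n - k)))"
  proof -
    have "(\<Sum>k\<le>n. smult (of_nat (n choose k)) (D k * E (Suc (n - k))))
       = (\<Sum>k\<le>Suc n. smult (of_nat (n choose k)) (D k * E (Suc n - k)))"
      by (simp add: Suc_diff_le)
    also have "\<dots> = D 0 * E (Suc n) + (\<Sum>k\<le>n. smult (of_nat (n choose Suc k)) (D (Suc k) * E (n - k)))"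
      by (subst sum.atMost_Suc_shift) simp
    finally show ?thesis .
  qed
  also have "(\<Sum>k\<le>Suc n. smult (of_nat (Suc n choose k)) ((pderiv ^^ k) p * (pderiv ^^ (Suc n - k)) q))
      = D 0 * E (Suc n) + (\<Sum>k\<le>n. smult (of_nat (Suc n choose Suc k)) (D (Suc k) * E (n - k)))"
    by (subst sum.atMost_Suc_shift) (simp add: D_def E_def)
  ultimately show ?case
    by (simp add: binomial_Suc_Suc sum.distrib smult_add_left algebra_simps)
qed


lemma tri:
  assumes "2*j + i \<le> n"
  shows "(n choose (2*j)) * ((2*j) choose j) * ((n-2*j) choose i) =
         (n choose (j+i)) * ((j+i) choose j) * ((n-(j+i)) choose j)"
proof -
  define F where "F = (fact j * fact j * fact i * fact (n-2*j-i) :: nat)"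
  have F0: "F > 0" by (simp add: F_def)
  have a: "fact j * fact j * ((2*j) choose j) = (fact (2*j) :: nat)"
    using binomial_fact_lemma[of j "2*j"] by (simp add: mult_2)
  have b: "fact i * fact (n-2*j-i) * ((n-2*j) choose i) = (fact (n-2*j) :: nat)"
    using binomial_fact_lemma[of i "n-2*j"] assms by (simp add: diff_diff_add)
  have c: "fact (2*j) * fact (n-2*j) * (n choose (2*j)) = (fact n :: nat)"
    using binomial_fact_lemma[of "2*j" n] assms by simp
  have d: "fact j * fact i * ((j+i) choose j) = (fact (j+i) :: nat)"
    using binomial_fact_lemma[of j "j+i"] by simp
  have e: "fact j * fact (n-2*j-i) * ((n-(j+i)) choose j) = (fact (n-(j+i)) :: nat)"
  proof -
    have "n-(j+i) - j = n-2*j-i" by simp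
    then show ?thesis using binomial_fact_lemma[of j "n-(j+i)"] assms by (simp add: ac_simps)
  qed
  have g: "fact (j+i) * fact (n-(j+i)) * (n choose (j+i)) = (fact n :: nat)"
    using binomial_fact_lemma[of "j+i" n] assms by simp
  have L: "(n choose (2*j)) * ((2*j) choose j) * ((n-2*j) choose i) * F = fact n"
  proof -
    have "(n choose (2*j)) * ((2*j) choose j) * ((n-2*j) choose i) * F
        = (n choose (2*j)) * (fact j * fact j * ((2*j) choose j)) * (fact i * fact (n-2*j-i) * ((n-2*j) choose i))"
      by (simp add: F_def ac_simps)
    also have "\<dots> = (n choose (2*j)) * fact (2*j) * fact (n-2*j)" by (simp only: a b)
    also have "\<dots> = fact n" using c by (simp add: ac_simps)
    finally show ?thesis .
  qed
  have R: "(n choose (j+i)) * ((j+i) choose j) * ((n-(j+i)) choose j) * F = fact n"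
  proof -
    have "(n choose (j+i)) * ((j+i) choose j) * ((n-(j+i)) choose j) * F
        = (n choose (j+i)) * (fact j * fact i * ((j+i) choose j)) * (fact j * fact (n-2*j-i) * ((n-(j+i)) choose j))"
      by (simp add: F_def ac_simps)
    also have "\<dots> = (n choose (j+i)) * fact (j+i) * fact (n-(j+i))" by (simp only: d e)
    also have "\<dots> = fact n" using g by (simp add: ac_simps)
    finally show ?thesis .
  qed
  show ?thesis using L R F0 by (metis mult_right_cancel less_irrefl)
qed

lemma vdm: "(n choose k) = (\<Sum>i\<le>n-k. (k choose i) * ((n-k) choose i))" if "k \<le> n"
proof -
  have "(\<Sum>i\<le>n-k. (k choose i) * ((n-k) choose (n-k-i))) = (k + (n-k)) choose (n-k)"
    by (rule vandermonde)
  also have "\<dots> = n choose k" using that by (simp add: binomial_symmetric[symmetric])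
  finally show ?thesis
    by (metis (no_types, lifting) atMost_iff binomial_symmetric sum.cong)
qed

lemma sum_ident:
  fixes u v :: "'a :: comm_ring_1"
  shows "(\<Sum>j\<le>n div 2. of_nat ((n choose (2*j)) * ((2*j) choose j)) * (u*v)^j * (u+v)^(n-2*j))
       = (\<Sum>k\<le>n. of_nat ((n choose k)^2) * u^k * v^(n-k))"
proof -
  define g where "g = (\<lambda>(j,i). of_nat ((n choose (2*j)) * ((2*j) choose j) * ((n-2*j) choose i)) * u^(j+i) * v^(n-(j+i)) :: 'a)"
  define h where "h = (\<lambda>(k,i). of_nat ((n choose k) * (k choose i) * ((n-k) choose i)) * u^k * v^(n-k) :: 'a)"
  define A where "A = Sigma {..n div 2} (\<lambda>j. {..n-2*j})"
  define B where "B = Sigma {..n} (\<lambda>k. {..n-k})"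
  define B' where "B' = {(k,i). k \<le> n \<and> i \<le> n - k \<and> i \<le> k}"
  have "(\<Sum>j\<le>n div 2. of_nat ((n choose (2*j)) * ((2*j) choose j)) * (u*v)^j * (u+v)^(n-2*j))
      = (\<Sum>j\<le>n div 2. \<Sum>i\<le>n-2*j. g (j,i))"
  proof (rule sum.cong[OF refl])
    fix j assume j: "j \<in> {..n div 2}"
    have "of_nat ((n choose (2*j)) * ((2*j) choose j)) * (u*v)^j * (u+v)^(n-2*j)
       = (\<Sum>i\<le>n-2*j. of_nat ((n choose (2*j)) * ((2*j) choose j)) * (u*v)^j * (of_nat ((n-2*j) choose i) * u^i * v^(n-2*j-i)))"
      by (simp add: binomial_ring sum_distrib_left)
    also have "\<dots> = (\<Sum>i\<le>n-2*j. g (j,i))"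
    proof (rule sum.cong[OF refl])
      fix i assume i: "i \<in> {..n-2*j}"
      have e: "n-(j+i) = j + (n-2*j-i)" using i j by auto
      show "of_nat ((n choose (2*j)) * ((2*j) choose j)) * (u*v)^j * (of_nat ((n-2*j) choose i) * u^i * v^(n-2*j-i)) = g (j,i)"
        unfolding g_def prod.case e by (simp add: power_add power_mult_distrib algebra_simps)
    qed
    finally show "of_nat ((n choose (2*j)) * ((2*j) choose j)) * (u*v)^j * (u+v)^(n-2*j) = (\<Sum>i\<le>n-2*j. g (j,i))" .
  qed
  also have "\<dots> = sum g A" unfolding A_def by (simp add: sum.Sigma)
  also have "\<dots> = sum h B'"
  proof (rule sum.reindex_bij_witness[where i = "\<lambda>(k,i). (i, k-i)" and j = "\<lambda>(j,i). (j+i, j)"])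
    fix a assume "a \<in> A" then show "(case (case a of (j, i) \<Rightarrow> (j + i, j)) of (k, i) \<Rightarrow> (i, k - i)) = a"
      by (cases a) auto
  next
    fix a assume "a \<in> A" then show "(case a of (j, i) \<Rightarrow> (j + i, j)) \<in> B'"
      unfolding A_def B'_def by (cases a) auto
  next
    fix b assume "b \<in> B'" then show "(case (case b of (k, i) \<Rightarrow> (i, k - i)) of (j, i) \<Rightarrow> (j + i, j)) = b"
      unfolding B'_def by (cases b) auto
  next
    fix b assume "b \<in> B'" then show "(case b of (k, i) \<Rightarrow> (i, k - i)) \<in> A"
      unfolding A_def B'_def by (cases b) auto
  next
    fix a assume "a \<in> A"
    then obtain j i where a: "a = (j,i)" "2*j + i \<le> n" unfolding A_def by auto
    have t: "of_nat ((n choose (2*j)) * ((2*j) choose j) * ((n-2*j) choose i)) =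
         (of_nat ((n choose (j+i)) * ((j+i) choose j) * ((n-(j+i)) choose j)) :: 'a)"
      using tri[OF a(2)] by metis
    show "h (case a of (j, i) \<Rightarrow> (j + i, j)) = g a"
      unfolding a(1) h_def g_def prod.case t ..
  qed
  also have "\<dots> = sum h B"
  proof (rule sum.mono_neutral_left)
    show "finite B" unfolding B_def by auto
    show "B' \<subseteq> B" unfolding B_def B'_def by auto
    show "\<forall>x\<in>B - B'. h x = 0"
    proof
      fix x assume "x \<in> B - B'"
      then obtain k i where x: "x = (k,i)" "k < i" unfolding B_def B'_def by (cases x) (auto simp: not_le)
      then have "(k choose i) = 0" by (simp add: binomial_eq_0)
      then show "h x = 0" unfolding x h_def prod.case using x(2) by (simp add: binomial_eq_0)
    qed
  qed
  also have "\<dots> = (\<Sum>k\<le>n. \<Sum>i\<le>n-k. h (k,i))" unfolding B_def by (simp add: sum.Sigma)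
  also have "\<dots> = (\<Sum>k\<le>n. of_nat ((n choose k)^2) * u^k * v^(n-k))"
  proof (rule sum.cong[OF refl])
    fix k assume k: "k \<in> {..n}"
    have "(\<Sum>i\<le>n-k. h (k,i)) = of_nat ((n choose k) * (\<Sum>i\<le>n-k. (k choose i) * ((n-k) choose i))) * u^k * v^(n-k)"
      unfolding h_def by (simp add: sum_distrib_left sum_distrib_right of_nat_sum algebra_simps)
    also have "\<dots> = of_nat ((n choose k)^2) * u^k * v^(n-k)"
      using k vdm[of k n] by (simp add: power2_eq_square)
    finally show "(\<Sum>i\<le>n-k. h (k,i)) = of_nat ((n choose k)^2) * u^k * v^(n-k)" .
  qed
  finally show ?thesis .
qed


lemma of_nat_poly_mult: "(of_nat c :: real poly) * p = smult (of_nat c) p"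
  by (simp add: of_nat_poly)

lemma dfact_prod: "dfact (2*j) * dfact (2*j - 1) = fact (2*j)"
proof (induction j)
  case 0 then show ?case by simp
next
  case (Suc j)
  have a: "2 * Suc j = Suc (Suc (2*j))" by simp
  have b: "dfact (Suc (2*j)) = (2*j+1) * dfact (2*j - 1)"
  proof (cases j)
    case 0 then show ?thesis by simp
  next
    case (Suc m)
    then have "Suc (2*j) = Suc (Suc (2*j - 1))" by simp
    then show ?thesis by (simp add: Suc)
  qed
  have "dfact (2 * Suc j) * dfact (2 * Suc j - 1) = (Suc (Suc (2*j)) * Suc (2*j)) * (dfact (2*j) * dfact (2*j - 1))"
    unfolding a by (simp only: diff_Suc_1 b dfact.simps) (simp add: algebra_simps)
  also have "\<dots> = fact (Suc (Suc (2*j)))" unfolding Suc.IH by (simp add: algebra_simps)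
  finally show ?case unfolding a .
qed

lemma dfact_even: "dfact (2*j) = 2^j * fact j"
  by (induction j) (simp_all add: algebra_simps)

lemma dfact_ratio: "real (dfact (2*j-1)) / real (dfact (2*j)) = real ((2*j) choose j) / 4^j"
proof -
  have f0: "fact j * fact j * ((2*j) choose j) = (fact (2*j) :: nat)"
    using binomial_fact_lemma[of j "2*j"] by (simp add: mult_2)
  have f: "(fact (2*j) :: real) = real ((2*j) choose j) * (fact j * fact j)"
    using arg_cong[OF f0, of real] by (simp add: ac_simps)
  have d: "real (dfact (2*j)) = 2^j * fact j" by (simp add: dfact_even)
  have p: "real (dfact (2*j)) * real (dfact (2*j-1)) = fact (2*j)"
    using arg_cong[OF dfact_prod[of j], of real] by simp
  have dz: "real (dfact (2*j)) \<noteq> 0" unfolding d by simp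
  have "real (dfact (2*j-1)) / real (dfact (2*j)) = fact (2*j) / (real (dfact (2*j)))^2"
    using dz p by (simp add: field_simps power2_eq_square)
  also have "(real (dfact (2*j)))^2 = 4^j * (fact j * fact j)"
    unfolding d by (simp add: power2_eq_square power_mult_distrib[symmetric] algebra_simps)
  also have "fact (2*j) / (4^j * (fact j * fact j)) = real ((2*j) choose j) / 4^j"
    unfolding f by simp
  finally show ?thesis .
qed


lemma sum_even:
  assumes "\<And>k. odd k \<Longrightarrow> F k = (0 :: 'a :: comm_monoid_add)"
  shows "(\<Sum>k\<le>(n::nat). F k) = (\<Sum>j\<le>n div 2. F (2*j))"
proof -
  have "(\<Sum>j\<le>n div 2. F (2*j)) = sum F ((\<lambda>j. 2*j) ` {..n div 2})"
    by (subst sum.reindex) (auto simp: inj_on_def)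
  also have "\<dots> = (\<Sum>k\<le>n. F k)"
  proof (rule sum.mono_neutral_left)
    show "(\<lambda>j. 2*j) ` {..n div 2} \<subseteq> {..n}" by auto
    show "\<forall>i\<in>{..n} - (\<lambda>j. 2*j) ` {..n div 2}. F i = 0"
    proof
      fix i assume i: "i \<in> {..n} - (\<lambda>j. 2*j) ` {..n div 2}"
      have "odd i"
      proof
        assume "even i"
        then have "i = 2 * (i div 2)" by simp
        moreover have "i div 2 \<le> n div 2" using i by (simp add: div_le_mono)
        ultimately show False using i by blast
      qed
      then show "F i = 0" by (rule assms)
    qed
  qed simp
  finally show ?thesis ..
qed

lemma smult_sum_right: "smult c (sum f A) = (\<Sum>x\<in>A. smult c (f x))"
  by (induction A rule: infinite_finite_induct) (simp_all add: smult_add_right)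

lemma ofn: "(of_nat c :: real poly) * p * q = smult (of_nat c) (p * q)"
  by (simp add: of_nat_poly)

lemma legendre_expand:
  "legendreP n = smult (1/2^n) (\<Sum>k\<le>n. of_nat ((n choose k)^2) * [:1,1:]^k * [:-1,1:]^(n-k))"
proof -
  have uv: "[:-1, 0, 1:] = [:-1,1:] * ([:1,1::real:])" by simp
  have "(pderiv ^^ n) ([:-1, 0, 1:] ^ n) = (pderiv ^^ n) ([:-1,1:]^n * [:1,1::real:]^n)"
    unfolding uv power_mult_distrib ..
  also have "\<dots> = (\<Sum>k\<le>n. smult (of_nat (n choose k))
       (smult (fact n / fact (n-k)) ([:-1,1:]^(n-k)) * smult (fact n / fact (n-(n-k))) ([:1,1:]^(n-(n-k)))))"
    unfolding leibniz higher_pderiv_linpow by (intro sum.cong) auto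
  also have "\<dots> = (\<Sum>k\<le>n. smult (fact n) (smult (of_nat ((n choose k)^2)) ([:1,1:]^k * [:-1,1:]^(n-k))))"
  proof (intro sum.cong refl)
    fix k assume k: "k \<in> {..n}"
    have e: "n - (n - k) = k" using k by simp
    have c: "real (n choose k) * fact k * fact (n-k) = fact n"
      using arg_cong[OF binomial_fact_lemma[of k n], of real] k by (simp add: ac_simps)
    have cc: "real (n choose k) * (fact n / fact (n-k) * (fact n / fact k)) = fact n * real ((n choose k)^2)"
      using c by (simp add: field_simps power2_eq_square)
    have "smult (of_nat (n choose k))
       (smult (fact n / fact (n-k)) ([:-1,1:]^(n-k)) * smult (fact n / fact (n-(n-k))) ([:1,1:]^(n-(n-k))))
       = smult (real (n choose k) * (fact n / fact (n-k) * (fact n / fact k))) ([:-1,1:]^(n-k) * [:1,1::real:]^k)"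
      unfolding e by (simp add: mult.commute)
    also have "\<dots> = smult (fact n) (smult (of_nat ((n choose k)^2)) ([:1,1:]^k * [:-1,1::real:]^(n-k)))"
      unfolding cc smult_smult by (simp only: mult.commute)
    finally show "smult (of_nat (n choose k))
       (smult (fact n / fact (n-k)) ([:-1,1:]^(n-k)) * smult (fact n / fact (n-(n-k))) ([:1,1:]^(n-(n-k))))
       = smult (fact n) (smult (of_nat ((n choose k)^2)) ([:1,1:]^k * [:-1,1::real:]^(n-k)))" .
  qed
  also have "\<dots> = smult (fact n) (\<Sum>k\<le>n. of_nat ((n choose k)^2) * [:1,1:]^k * [:-1,1:]^(n-k))"
    unfolding ofn smult_sum_right ..
  finally show ?thesis unfolding legendreP_def by simp
qed


definition Q0 :: "nat \<Rightarrow> real poly" where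
  "Q0 k = (if even k then smult (real (dfact (k-1)) / real (dfact k)) ([:-1, 0, 1:] ^ (k div 2)) else 0)"

lemma Q0_even: "Q0 (2*j) = smult (real ((2*j) choose j) / 4^j) (([:1,1:] * [:-1,1:]) ^ j)"
proof -
  have uv: "[:-1, 0, 1:] = [:1,1:] * ([:-1,1::real:])" by simp
  show ?thesis unfolding Q0_def uv using dfact_ratio[of j] by simp
qed

lemma mono_rep:
  "legendreP n = (\<Sum>k\<le>n. smult (1 / fact k) (Q0 k * (pderiv ^^ k) ([:0,1:] ^ n)))"
proof -
  define U where "U = [:1,1::real:]"
  define V where "V = [:-1,1::real:]"
  have X: "[:0,1:] = smult (1/2) (U + V)" unfolding U_def V_def by simp
  have "(\<Sum>k\<le>n. smult (1 / fact k) (Q0 k * (pderiv ^^ k) ([:0,1:] ^ n)))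
      = (\<Sum>j\<le>n div 2. smult (1 / fact (2*j)) (Q0 (2*j) * (pderiv ^^ (2*j)) ([:0,1:] ^ n)))"
    by (rule sum_even) (simp add: Q0_def)
  also have "\<dots> = (\<Sum>j\<le>n div 2. smult (1/2^n) (of_nat ((n choose (2*j)) * ((2*j) choose j)) * (U*V)^j * (U+V)^(n-2*j)))"
  proof (intro sum.cong refl)
    fix j assume j: "j \<in> {..n div 2}"
    then have jn: "2*j \<le> n" by auto
    have c: "real (n choose (2*j)) * fact (2*j) * fact (n-2*j) = fact n"
      using arg_cong[OF binomial_fact_lemma[OF jn], of real] by (simp add: ac_simps)
    have p2: "(4::real)^j * 2^(n-2*j) = 2^n"
    proof -
      have "(4::real)^j = 2^(2*j)" by (simp add: power_mult)
      then show ?thesis using jn by (simp flip: power_add)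
    qed
    have sc: "1 / fact (2*j) * (real ((2*j) choose j) / 4^j) * (fact n / fact (n - 2*j)) * (1/2)^(n-2*j)
          = 1/2^n * real ((n choose (2*j)) * ((2*j) choose j))"
    proof -
      have "1 / fact (2*j) * (real ((2*j) choose j) / 4^j) * (fact n / fact (n - 2*j)) * (1/2)^(n-2*j)
          = (fact n / (fact (2*j) * fact (n-2*j))) * real ((2*j) choose j) / (4^j * 2^(n-2*j))"
        by (simp add: field_simps power_divide)
      also have "fact n / (fact (2*j) * fact (n-2*j)) = real (n choose (2*j))"
        unfolding c[symmetric] by simp
      finally show ?thesis unfolding p2 by simp
    qed
    have "smult (1 / fact (2*j)) (Q0 (2*j) * (pderiv ^^ (2*j)) ([:0,1:] ^ n))
       = smult (1 / fact (2*j) * (real ((2*j) choose j) / 4^j) * (fact n / fact (n - 2*j)) * (1/2)^(n-2*j))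
           ((U*V)^j * (U+V)^(n-2*j))"
    proof -
      have q: "Q0 (2*j) = smult (real ((2*j) choose j) / 4^j) ((U*V)^j)"
        unfolding Q0_even U_def V_def ..
      have d: "(pderiv ^^ (2*j)) ([:0,1:] ^ n :: real poly) = smult (fact n / fact (n - 2*j)) ([:0,1:] ^ (n - 2*j))"
        using higher_pderiv_linpow[of "2*j" 0 n] jn by simp
      have x: "([:0,1:] ^ (n - 2*j) :: real poly) = smult ((1/2)^(n-2*j)) ((U+V)^(n-2*j))"
        unfolding X smult_power ..
      show ?thesis unfolding q d x by (simp only: mult_smult_left mult_smult_right smult_smult mult.assoc)
        (simp only: mult_ac)
    qed
    also have "\<dots> = smult (1/2^n) (of_nat ((n choose (2*j)) * ((2*j) choose j)) * (U*V)^j * (U+V)^(n-2*j))"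
      unfolding sc mult.assoc[of "of_nat _"] of_nat_poly_mult by simp
    finally show "smult (1 / fact (2*j)) (Q0 (2*j) * (pderiv ^^ (2*j)) ([:0,1:] ^ n))
       = smult (1/2^n) (of_nat ((n choose (2*j)) * ((2*j) choose j)) * (U*V)^j * (U+V)^(n-2*j))" .
  qed
  also have "\<dots> = smult (1/2^n) (\<Sum>j\<le>n div 2. of_nat ((n choose (2*j)) * ((2*j) choose j)) * (U*V)^j * (U+V)^(n-2*j))"
    unfolding smult_sum_right ..
  also have "\<dots> = legendreP n"
    unfolding sum_ident legendre_expand U_def V_def ..
  finally show ?thesis ..
qed


lemma top_deriv: "smult (1 / fact n) (Q * (pderiv ^^ n) ([:0,1:] ^ n :: real poly)) = Q"
  using higher_pderiv_linpow[of n 0 n] by simp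

lemma uniq:
  assumes "represents Q S" "represents Q' S"
  shows "Q n = Q' n"
proof (induction n rule: less_induct)
  case (less n)
  define G where "G = (\<lambda>Q k. smult (1 / fact k) (Q k * (pderiv ^^ k) ([:0,1:] ^ n :: real poly)))"
  have deg: "degree ([:0,1:] ^ n :: real poly) = n" by (rule degree_linear_power)
  have "S ([:0,1:] ^ n) = (\<Sum>k\<le>n. G Q k)" "S ([:0,1:] ^ n) = (\<Sum>k\<le>n. G Q' k)"
    using assms unfolding represents_def G_def
    by (metis deg)+
  then have "(\<Sum>k<n. G Q k) + G Q n = (\<Sum>k<n. G Q' k) + G Q' n"
    by (simp add: lessThan_Suc_atMost[symmetric])
  moreover have "(\<Sum>k<n. G Q k) = (\<Sum>k<n. G Q' k)"
    using less by (intro sum.cong) (auto simp: G_def)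
  ultimately have "G Q n = G Q' n" by simp
  then show ?case unfolding G_def top_deriv .
qed

lemma rep: "represents Q0 legendreT"
  unfolding represents_def
proof
  fix p :: "real poly"
  define d where "d = degree p"
  define G where "G = (\<lambda>i k. smult (1 / fact k) (Q0 k * (pderiv ^^ k) ([:0,1:] ^ i)))"
  have p: "p = (\<Sum>i\<le>d. smult (coeff p i) ([:0,1:] ^ i))"
    unfolding d_def monom_altdef[symmetric] poly_as_sum_of_monoms ..
  have Dp: "(pderiv ^^ k) p = (\<Sum>i\<le>d. smult (coeff p i) ((pderiv ^^ k) ([:0,1:] ^ i)))" for k
    by (subst p) (simp add: higher_pderiv_sum higher_pderiv_smult)
  have "(\<Sum>k\<le>d. smult (1 / fact k) (Q0 k * (pderiv ^^ k) p))
      = (\<Sum>k\<le>d. \<Sum>i\<le>d. smult (coeff p i) (G i k))"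
    unfolding Dp G_def by (simp add: sum_distrib_left smult_sum_right)
  also have "\<dots> = (\<Sum>i\<le>d. smult (coeff p i) (\<Sum>k\<le>d. G i k))"
    by (subst sum.swap) (simp add: smult_sum_right)
  also have "\<dots> = (\<Sum>i\<le>d. smult (coeff p i) (legendreP i))"
  proof (intro sum.cong refl arg_cong[where f = "smult _"])
    fix i assume i: "i \<in> {..d}"
    have "(\<Sum>k\<le>d. G i k) = (\<Sum>k\<le>i. G i k)"
    proof (rule sum.mono_neutral_right)
      show "\<forall>k\<in>{..d} - {..i}. G i k = 0"
        unfolding G_def by (auto simp: higher_pderiv_linpow[of _ 0])
    qed (use i in auto)
    also have "\<dots> = legendreP i" unfolding G_def mono_rep ..
    finally show "(\<Sum>k\<le>d. G i k) = legendreP i" .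
  qed
  finally show "legendreT p = (\<Sum>k\<le>degree p. smult (1 / fact k) (Q0 k * (pderiv ^^ k) p))"
    unfolding legendreT_def d_def by simp
qed

theorem theorem7p4:
  fixes Q :: "nat \<Rightarrow> real poly"
  shows "represents Q legendreT \<longleftrightarrow>
    (\<forall>k. Q (2*k+1) = 0 \<and>
         Q (2*k) = smult (real (dfact (2*k-1)) / real (dfact (2*k))) ([:-1, 0, 1:] ^ k))"
proof
  assume h: "represents Q legendreT"
  have "Q n = Q0 n" for n using uniq[OF h rep] .
  then show "\<forall>k. Q (2*k+1) = 0 \<and>
         Q (2*k) = smult (real (dfact (2*k-1)) / real (dfact (2*k))) ([:-1, 0, 1:] ^ k)"
    by (simp add: Q0_def)
next
  assume h: "\<forall>k. Q (2*k+1) = 0 \<and>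
         Q (2*k) = smult (real (dfact (2*k-1)) / real (dfact (2*k))) ([:-1, 0, 1:] ^ k)"
  have "Q n = Q0 n" for n
  proof (cases "even n")
    case True
    then obtain k where "n = 2*k" by auto
    then show ?thesis using h by (simp add: Q0_def)
  next
    case False
    then obtain k where "n = 2*k+1" using oddE by blast
    then show ?thesis using h by (simp add: Q0_def)
  qed
  then have "Q = Q0" by auto
  then show "represents Q legendreT" using rep by simp
qed

end
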